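(* (a) For the complete graph $K_n$ on $n$ vertices, $\mathrm{SOL}(K_n)=\Delta_n:=\{x\in\mathbb{R}^n\mid x\geq 0,\ \mathbf{e}^\top x=1\}$. (b) If $G$ is a forest, $x\in\mathrm{SOL}(G)$ and $\sigma(x)=V(G)$, then $G$ is a disjoint union of copies of $K_1$ and $K_2$. (c) If $G$ is a forest and $x\in\mathrm{SOL}(G)$, then the induced subgraph $G_{\sigma(x)}$ is a disjoint union of copies of $K_1$ and $K_2$. (d) If $R_{n,d}$ is a $d$-regular graph on $n$ vertices, then $\beta(R_{n,d})\geq \frac{n}{d+1}$.
   Context: All graphs are simple (finite, undirected, no loops). For a graph $H$ with adjacency matrix $A_H$, $\mathrm{SOL}(H)$ is the set of $x$ with $x\geq 0$, $(A_H+I)x\geq\mathbf{e}$ and $x^\top((A_H+I)x-\mathbf{e})=0$ ($I$ identity, $\mathbf{e}$ all-ones vector). $\sigma(x):=\{i\mid x_i>0\}$; $G_S$ is the subgraph induced by $S$. A forest is a graph without cycles. $\beta(G)$ is the minimum cardinality of a maximal independent set of $G$. *)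

theory Defs
  imports Complex_Main
begin

definition simple_graph :: "'a set \<Rightarrow> ('a \<Rightarrow> 'a \<Rightarrow> bool) \<Rightarrow> bool" where
  "simple_graph V E \<longleftrightarrow> finite V \<and>
     (\<forall>u v. E u v \<longrightarrow> u \<in> V \<and> v \<in> V \<and> u \<noteq> v \<and> E v u)"

definition adj :: "('a \<Rightarrow> 'a \<Rightarrow> bool) \<Rightarrow> 'a \<Rightarrow> 'a \<Rightarrow> real" where
  "adj E i j = (if E i j then 1 else 0)"

definition AIx :: "'a set \<Rightarrow> ('a \<Rightarrow> 'a \<Rightarrow> bool) \<Rightarrow> ('a \<Rightarrow> real) \<Rightarrow> 'a \<Rightarrow> real" where
  "AIx V E x i = (\<Sum>j\<in>V. (adj E i j + (if i = j then 1 else 0)) * x j)"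

text \<open>x in SOL(H); only the entries of x on V matter.\<close>
definition SOL :: "'a set \<Rightarrow> ('a \<Rightarrow> 'a \<Rightarrow> bool) \<Rightarrow> ('a \<Rightarrow> real) \<Rightarrow> bool" where
  "SOL V E x \<longleftrightarrow> (\<forall>i\<in>V. x i \<ge> 0) \<and> (\<forall>i\<in>V. AIx V E x i \<ge> 1) \<and>
     (\<Sum>i\<in>V. x i * (AIx V E x i - 1)) = 0"

definition supp :: "'a set \<Rightarrow> ('a \<Rightarrow> real) \<Rightarrow> 'a set" where
  "supp V x = {i \<in> V. x i > 0}"

definition simplex :: "'a set \<Rightarrow> ('a \<Rightarrow> real) \<Rightarrow> bool" where
  "simplex V x \<longleftrightarrow> (\<forall>i\<in>V. x i \<ge> 0) \<and> (\<Sum>i\<in>V. x i) = 1"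

definition complete_graph :: "'a set \<Rightarrow> 'a \<Rightarrow> 'a \<Rightarrow> bool" where
  "complete_graph V u v \<longleftrightarrow> u \<in> V \<and> v \<in> V \<and> u \<noteq> v"

definition induced :: "('a \<Rightarrow> 'a \<Rightarrow> bool) \<Rightarrow> 'a set \<Rightarrow> 'a \<Rightarrow> 'a \<Rightarrow> bool" where
  "induced E S u v \<longleftrightarrow> E u v \<and> u \<in> S \<and> v \<in> S"

definition is_cycle :: "'a set \<Rightarrow> ('a \<Rightarrow> 'a \<Rightarrow> bool) \<Rightarrow> 'a list \<Rightarrow> bool" where
  "is_cycle V E cs \<longleftrightarrow> length cs \<ge> 3 \<and> distinct cs \<and> set cs \<subseteq> V \<and>
     (\<forall>i. Suc i < length cs \<longrightarrow> E (cs ! i) (cs ! Suc i)) \<and> E (last cs) (hd cs)"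

definition forest :: "'a set \<Rightarrow> ('a \<Rightarrow> 'a \<Rightarrow> bool) \<Rightarrow> bool" where
  "forest V E \<longleftrightarrow> simple_graph V E \<and> \<not> (\<exists>cs. is_cycle V E cs)"

definition union_K1_K2 :: "'a set \<Rightarrow> ('a \<Rightarrow> 'a \<Rightarrow> bool) \<Rightarrow> bool" where
  "union_K1_K2 V E \<longleftrightarrow> (\<exists>P. \<Union>P = V \<and> (\<forall>C\<in>P. \<forall>D\<in>P. C \<noteq> D \<longrightarrow> C \<inter> D = {}) \<and>
     (\<forall>C\<in>P. (card C = 1 \<or> card C = 2) \<and> (\<forall>u\<in>C. \<forall>v\<in>C. u \<noteq> v \<longrightarrow> E u v)) \<and>
     (\<forall>u v. E u v \<longrightarrow> (\<exists>C\<in>P. u \<in> C \<and> v \<in> C)))"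

definition degree :: "'a set \<Rightarrow> ('a \<Rightarrow> 'a \<Rightarrow> bool) \<Rightarrow> 'a \<Rightarrow> nat" where
  "degree V E v = card {u \<in> V. E v u}"

definition regular :: "'a set \<Rightarrow> ('a \<Rightarrow> 'a \<Rightarrow> bool) \<Rightarrow> nat \<Rightarrow> bool" where
  "regular V E d \<longleftrightarrow> (\<forall>v\<in>V. degree V E v = d)"

definition independent :: "'a set \<Rightarrow> ('a \<Rightarrow> 'a \<Rightarrow> bool) \<Rightarrow> 'a set \<Rightarrow> bool" where
  "independent V E S \<longleftrightarrow> S \<subseteq> V \<and> (\<forall>u\<in>S. \<forall>v\<in>S. \<not> E u v)"

definition maximal_independent :: "'a set \<Rightarrow> ('a \<Rightarrow> 'a \<Rightarrow> bool) \<Rightarrow> 'a set \<Rightarrow> bool" where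
  "maximal_independent V E S \<longleftrightarrow> independent V E S \<and>
     (\<forall>T. independent V E T \<and> S \<subseteq> T \<longrightarrow> T = S)"

definition beta :: "'a set \<Rightarrow> ('a \<Rightarrow> 'a \<Rightarrow> bool) \<Rightarrow> nat" where
  "beta V E = Min {card S | S. maximal_independent V E S}"

end

theory Submission
  imports Defs
begin

lemma partA:
  assumes "finite V" "V \<noteq> {}"
  shows "SOL V (complete_graph V) x \<longleftrightarrow> simplex V x"
proof -
  have A: "AIx V (complete_graph V) x i = (\<Sum>j\<in>V. x j)" if "i \<in> V" for i
    unfolding AIx_def adj_def complete_graph_def using that
    by (intro sum.cong) auto
  let ?s = "\<Sum>j\<in>V. x j"
  have B: "(\<Sum>i\<in>V. x i * (AIx V (complete_graph V) x i - 1)) = ?s * (?s - 1)"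
    by (simp add: A sum_distrib_right)
  show ?thesis
  proof
    assume "SOL V (complete_graph V) x"
    then have p: "\<forall>i\<in>V. x i \<ge> 0" "\<forall>i\<in>V. ?s \<ge> 1" "?s * (?s - 1) = 0"
      unfolding SOL_def B by (auto simp: A)
    from assms(2) p(2) have "?s \<ge> 1" by auto
    with p(3) have "?s = 1" by auto
    with p(1) show "simplex V x" unfolding simplex_def by auto
  next
    assume "simplex V x"
    then show "SOL V (complete_graph V) x" unfolding SOL_def B simplex_def by (auto simp: A)
  qed
qed

lemma no_nonbacktrack:
  assumes sg: "simple_graph V E" and nc: "\<not> (\<exists>cs. is_cycle V E cs)"
    and fV: "\<And>k. f k \<in> V" and fE: "\<And>k. E (f k) (f (Suc k))"
    and fb: "\<And>k. f (Suc (Suc k)) \<noteq> f k"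
  shows False
proof -
  have fin: "finite V" using sg unfolding simple_graph_def by blast
  have irr: "\<not> E v v" for v using sg unfolding simple_graph_def by blast
  have "\<not> inj f"
  proof
    assume "inj f"
    then have "infinite (range f)" using finite_imageD by auto
    moreover have "range f \<subseteq> V" using fV by auto
    ultimately show False using fin finite_subset by blast
  qed
  then obtain i j where ij: "i \<noteq> j" "f i = f j" unfolding inj_def by blast
  then have "\<exists>d i. d > 0 \<and> f i = f (i + d)"
    by (metis add_diff_inverse_nat less_imp_add_positive linorder_neqE_nat zero_less_iff_neq_zero)
  define d where "d = (LEAST d. d > 0 \<and> (\<exists>i. f i = f (i + d)))"
  have d1: "d > 0 \<and> (\<exists>i. f i = f (i + d))"
    unfolding d_def by (rule LeastI_ex) (use \<open>\<exists>d i. d > 0 \<and> f i = f (i + d)\<close> in blast)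
  have dmin: "\<not> (d' > 0 \<and> f i' = f (i' + d'))" if "d' < d" for d' i'
    using not_less_Least[OF that[unfolded d_def]] by blast
  from d1 obtain i where di: "d > 0" "f i = f (i + d)" by blast
  define cs where "cs = map (\<lambda>k. f (i + k)) [0..<d]"
  have len: "length cs = d" by (simp add: cs_def)
  have nth: "k < d \<Longrightarrow> cs ! k = f (i + k)" for k by (simp add: cs_def)
  have "d \<noteq> 1"
  proof
    assume "d = 1" then show False using di fE[of i] irr by simp
  qed
  moreover have "d \<noteq> 2"
  proof
    assume "d = 2" then show False using di fb[of i] by (simp add: numeral_2_eq_2)
  qed
  ultimately have d3: "d \<ge> 3" using di(1) by linarith
  have dist: "distinct cs"
  proof -
    have "f (i + p) \<noteq> f (i + q)" if "p < q" "q < d" for p q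
      using dmin[of "q - p" "i + p"] that by simp
    then show ?thesis unfolding distinct_conv_nth len
      by (metis nth linorder_neqE_nat)
  qed
  have "is_cycle V E cs"
    unfolding is_cycle_def
  proof (intro conjI allI impI)
    show "3 \<le> length cs" using len d3 by simp
    show "distinct cs" by (rule dist)
    show "set cs \<subseteq> V" using fV by (auto simp: cs_def)
    fix k assume "Suc k < length cs"
    then show "E (cs ! k) (cs ! Suc k)" using nth len fE[of "i + k"] by simp
  next
    have "last cs = f (i + (d - 1))" using len nth d3
      by (metis last_conv_nth diff_less less_numeral_extra(1) list.size(3) not_one_le_zero
          zero_less_iff_neq_zero di(1) length_0_conv)
    moreover have "hd cs = f (i + d)" using di nth[of 0] d3 len
      by (metis add_0_right hd_conv_nth di(1) length_0_conv not_gr0)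
    moreover have "Suc (i + (d - 1)) = i + d" using di by simp
    ultimately show "E (last cs) (hd cs)" using fE[of "i + (d - 1)"] by simp
  qed
  with nc show False by blast
qed

lemma core:
  assumes sg: "simple_graph S F" and nc: "\<not> (\<exists>cs. is_cycle S F cs)"
    and pos: "\<forall>i\<in>S. x i > 0" and eq: "\<forall>i\<in>S. AIx S F x i = 1"
  shows "union_K1_K2 S F"
proof -
  have fin: "finite S" using sg unfolding simple_graph_def by blast
  have inS: "F u v \<Longrightarrow> u \<in> S \<and> v \<in> S \<and> u \<noteq> v \<and> F v u" for u v
    using sg unfolding simple_graph_def by blast
  have sy: "F u v \<Longrightarrow> F v u" for u v using inS by blast
  have s1: "F u v \<Longrightarrow> u \<in> S" for u v using inS by blast
  have s2: "F u v \<Longrightarrow> v \<in> S" for u v using inS by blast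
  have ir: "\<not> F u u" for u using inS by blast
  have step: "\<exists>c. F b c \<and> c \<noteq> a" if ab: "F a b" and aw: "F a w" "w \<noteq> b" for a b w
  proof (rule ccontr)
    assume "\<not> ?thesis"
    then have only: "c \<noteq> a \<Longrightarrow> \<not> F b c" for c by blast
    have a: "a \<in> S" "b \<in> S" "w \<in> S" "a \<noteq> b" "a \<noteq> w" using s1[OF ab] s2[OF ab] s2[OF aw(1)] ir[of a] ab aw by auto
    let ?t = "\<lambda>i j. (adj F i j + (if i = j then 1 else 0)) * x j"
    have nn: "?t i j \<ge> 0" if "j \<in> S" for i j using pos that by (auto simp: adj_def)
    have s1: "(\<Sum>j\<in>{a,b,w}. ?t a j) \<le> (\<Sum>j\<in>S. ?t a j)"
      by (rule sum_mono2) (use fin a nn in auto)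
    have s2: "(\<Sum>j\<in>{a,b,w}. ?t a j) = x a + x b + x w"
      using a aw ab ir by (auto simp: adj_def)
    have "(\<Sum>j\<in>S. ?t b j) = (\<Sum>j\<in>S. (if j = a then x a else 0) + (if j = b then x b else 0))"
      apply (rule sum.cong, simp)
      using only a ab sy[OF ab] ir by (auto simp: adj_def)
    then have s3: "(\<Sum>j\<in>S. ?t b j) = x a + x b" using a fin by (simp add: sum.distrib)
    have e1: "(\<Sum>j\<in>S. ?t a j) = 1" and e2: "(\<Sum>j\<in>S. ?t b j) = 1"
      using eq a unfolding AIx_def by auto
    have "x w > 0" using pos a by auto
    then show False using s1 s2 s3 e1 e2 by linarith
  qed
  have deg: "F v u \<Longrightarrow> F v w \<Longrightarrow> u = w" for v u w
  proof (rule ccontr)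
    assume h: "F v u" "F v w" "u \<noteq> w"
    define h where "h = rec_nat (v, u) (\<lambda>_ p. (snd p, SOME c. F (snd p) c \<and> c \<noteq> fst p))"
    have h0: "h 0 = (v, u)" and hS: "h (Suc k) = (snd (h k), SOME c. F (snd (h k)) c \<and> c \<noteq> fst (h k))" for k
      by (simp_all add: h_def)
    have inv: "F (fst (h k)) (snd (h k)) \<and> (\<exists>c. F (fst (h k)) c \<and> c \<noteq> snd (h k))" for k
    proof (induction k)
      case 0 then show ?case using h h0 by auto
    next
      case (Suc k)
      then obtain c where "F (fst (h k)) c" "c \<noteq> snd (h k)" by blast
      from step[OF _ this] Suc have "\<exists>c. F (snd (h k)) c \<and> c \<noteq> fst (h k)" by blast
      then have "F (snd (h k)) (SOME c. F (snd (h k)) c \<and> c \<noteq> fst (h k)) \<and>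
                 (SOME c. F (snd (h k)) c \<and> c \<noteq> fst (h k)) \<noteq> fst (h k)"
        by (rule someI_ex)
      then show ?case using hS[of k] Suc sy[of "fst (h k)" "snd (h k)"] by auto
    qed
    define f where "f k = fst (h k)" for k
    have sf: "snd (h k) = f (Suc k)" for k by (simp add: f_def hS)
    have fk: "fst (h k) = f k" for k by (simp add: f_def)
    show False
    proof (rule no_nonbacktrack[OF sg nc, of f])
      fix k
      show "F (f k) (f (Suc k))" using inv[of k] unfolding sf fk by simp
      then show "f k \<in> S" using inS by blast
      have "f (Suc (Suc k)) = (SOME c. F (snd (h k)) c \<and> c \<noteq> fst (h k))"
        by (simp add: f_def hS)
      moreover obtain c where "F (fst (h k)) c" "c \<noteq> snd (h k)" using inv[of k] by blast
      from step[OF _ this] inv[of k] have "\<exists>c. F (snd (h k)) c \<and> c \<noteq> fst (h k)" by blast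
      then have "(SOME c. F (snd (h k)) c \<and> c \<noteq> fst (h k)) \<noteq> fst (h k)"
        by (metis (mono_tags, lifting) someI_ex)
      ultimately show "f (Suc (Suc k)) \<noteq> f k" by (simp add: fk)
    qed
  qed
  have nb: "F v w \<Longrightarrow> {u. F v u} = {w}" for v w using deg by blast
  define P where "P = (\<lambda>v. insert v {u. F v u}) ` S"
  show ?thesis unfolding union_K1_K2_def
  proof (intro exI[of _ P] conjI ballI allI impI)
    show "\<Union>P = S" using s2 by (auto simp: P_def)
  next
    fix C D assume "C \<in> P" "D \<in> P" "C \<noteq> D"
    then obtain v w where C: "C = insert v {u. F v u}" and D: "D = insert w {u. F w u}"
      by (auto simp: P_def)
    show "C \<inter> D = {}"
    proof (rule ccontr)
      assume "C \<inter> D \<noteq> {}"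
      then obtain z where z: "z \<in> C" "z \<in> D" by blast
      have "v = w \<or> F v w"
      proof -
        have "z = v \<or> F v z" "z = w \<or> F w z" using z C D by auto
        then show ?thesis using deg[of z v w] sy[of v z] sy[of w z] sy[of w v] by blast
      qed
      moreover have eqC: "F v w \<Longrightarrow> C = {v, w} \<and> D = {w, v}"
        using C D nb[of v w] nb[of w v] sy[of v w] by auto
      ultimately show False using \<open>C \<noteq> D\<close> C D by auto
    qed
  next
    fix C assume "C \<in> P"
    then obtain v where C: "C = insert v {u. F v u}" by (auto simp: P_def)
    show "card C = 1 \<or> card C = 2"
    proof (cases "\<exists>u. F v u")
      case True
      then obtain u where "F v u" by blast
      then have "C = {v, u}" "v \<noteq> u" using C nb[of v u] ir by auto
      then show ?thesis by simp
    next
      case False then show ?thesis using C by simp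
    qed
  next
    fix C u w assume "C \<in> P" "u \<in> C" "w \<in> C" "u \<noteq> w"
    then obtain v where C: "C = insert v {u. F v u}" by (auto simp: P_def)
    show "F u w"
    proof (cases "\<exists>u. F v u")
      case True
      then obtain y where "F v y" by blast
      then have "C = {v, y}" using C nb[of v y] by auto
      then show ?thesis using \<open>F v y\<close> sy[of v y] \<open>u \<in> C\<close> \<open>w \<in> C\<close> \<open>u \<noteq> w\<close> by auto
    next
      case False then show ?thesis using C \<open>u \<in> C\<close> \<open>w \<in> C\<close> \<open>u \<noteq> w\<close> by auto
    qed
  next
    fix u v assume "F u v"
    then show "\<exists>C\<in>P. u \<in> C \<and> v \<in> C" using s1 by (auto simp: P_def)
  qed
qed

lemma sol_eq1:
  assumes sg: "simple_graph V E" and sol: "SOL V E x" and i: "i \<in> V" "x i > 0"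
  shows "AIx V E x i = 1"
proof -
  have fin: "finite V" using sg unfolding simple_graph_def by blast
  have nn: "\<forall>j\<in>V. 0 \<le> x j * (AIx V E x j - 1)" using sol unfolding SOL_def by auto
  have z: "(\<Sum>j\<in>V. x j * (AIx V E x j - 1)) = 0" using sol unfolding SOL_def by blast
  have "\<forall>j\<in>V. x j * (AIx V E x j - 1) = 0"
    using sum_nonneg_eq_0_iff[OF fin, of "\<lambda>j. x j * (AIx V E x j - 1)"] nn z by blast
  then have "x i * (AIx V E x i - 1) = 0" using i by blast
  then show ?thesis using i by simp
qed

lemma partB:
  assumes f: "forest V E" and sol: "SOL V E x" and sp: "supp V x = V"
  shows "union_K1_K2 V E"
proof -
  have sg: "simple_graph V E" and nc: "\<not> (\<exists>cs. is_cycle V E cs)" using f unfolding forest_def by auto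
  have pos: "\<forall>i\<in>V. x i > 0" using sp unfolding supp_def by blast
  show ?thesis by (rule core[OF sg nc pos]) (use sol_eq1[OF sg sol] pos in blast)
qed

lemma partC:
  assumes f: "forest V E" and sol: "SOL V E x"
  shows "union_K1_K2 (supp V x) (induced E (supp V x))"
proof -
  define S where "S = supp V x"
  have sg: "simple_graph V E" and nc: "\<not> (\<exists>cs. is_cycle V E cs)" using f unfolding forest_def by auto
  have fin: "finite V" using sg unfolding simple_graph_def by blast
  have SV: "S \<subseteq> V" by (auto simp: S_def supp_def)
  have sgS: "simple_graph S (induced E S)"
  proof -
    have "finite S" using fin SV by (rule rev_finite_subset)
    moreover have "\<forall>u v. induced E S u v \<longrightarrow> u \<in> S \<and> v \<in> S \<and> u \<noteq> v \<and> induced E S v u"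
      using sg unfolding simple_graph_def induced_def by blast
    ultimately show ?thesis unfolding simple_graph_def by blast
  qed
  have ncS: "\<not> (\<exists>cs. is_cycle S (induced E S) cs)"
  proof
    assume "\<exists>cs. is_cycle S (induced E S) cs"
    then obtain cs where "is_cycle S (induced E S) cs" by blast
    then have "is_cycle V E cs" using SV unfolding is_cycle_def induced_def by auto
    with nc show False by blast
  qed
  have pos: "\<forall>i\<in>S. x i > 0" by (auto simp: S_def supp_def)
  have x0: "x j = 0" if "j \<in> V - S" for j
  proof -
    have "x j \<ge> 0" using that sol unfolding SOL_def by blast
    moreover have "\<not> x j > 0" using that unfolding S_def supp_def by blast
    ultimately show ?thesis by linarith
  qed
  have eq: "AIx S (induced E S) x i = 1" if "i \<in> S" for i
  proof -
    have "AIx S (induced E S) x i = AIx V E x i"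
      unfolding AIx_def
    proof (rule sum.mono_neutral_cong_left[OF fin SV])
      show "\<forall>j\<in>V - S. (adj E i j + (if i = j then 1 else 0)) * x j = 0" using x0 by simp
      show "\<And>j. j \<in> S \<Longrightarrow> (adj (induced E S) i j + (if i = j then 1 else 0)) * x j =
               (adj E i j + (if i = j then 1 else 0)) * x j"
        using that by (simp add: adj_def induced_def)
    qed
    also have "\<dots> = 1" using sol_eq1[OF sg sol] that SV pos by blast
    finally show ?thesis .
  qed
  show ?thesis unfolding S_def[symmetric] by (rule core[OF sgS ncS pos]) (use eq in blast)
qed

lemma partD:
  assumes sg: "simple_graph V E" and n: "card V = n" and reg: "regular V E d"
  shows "real (beta V E) \<ge> real n / (real d + 1)"
proof -
  have fin: "finite V" using sg unfolding simple_graph_def by blast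
  have inV: "E u v \<Longrightarrow> u \<in> V \<and> v \<in> V" for u v using sg unfolding simple_graph_def by blast
  have sy: "E u v \<Longrightarrow> E v u" for u v using sg unfolding simple_graph_def by blast
  have ir: "\<not> E u u" for u using sg unfolding simple_graph_def by blast
  define M where "M = {S. maximal_independent V E S}"
  have finI: "finite {S. independent V E S}"
    by (rule finite_subset[of _ "Pow V"]) (use fin in \<open>auto simp: independent_def\<close>)
  have "\<exists>S. independent V E S \<and> (\<forall>T. independent V E T \<longrightarrow> card T \<le> card S)"
  proof -
    have ne: "{S. independent V E S} \<noteq> {}" using independent_def by auto
    let ?I = "{S. independent V E S}"
    have "Max (card ` ?I) \<in> card ` ?I" by (rule Max_in) (use finI ne in auto)
    then obtain S where S: "S \<in> ?I" "card S = Max (card ` ?I)" by auto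
    have "\<forall>T \<in> ?I. card T \<le> card S" unfolding S(2) using finI by (auto intro: Max_ge)
    then show ?thesis using S by auto
  qed
  then obtain S0 where S0: "independent V E S0" "\<And>T. independent V E T \<Longrightarrow> card T \<le> card S0" by blast
  have "maximal_independent V E S0"
    unfolding maximal_independent_def
  proof (intro conjI allI impI)
    show "independent V E S0" by fact
    fix T assume T: "independent V E T \<and> S0 \<subseteq> T"
    then have "finite T" using fin independent_def finite_subset by metis
    then show "T = S0" using card_subset_eq[of T S0] S0(2) T card_mono by (metis le_antisym)
  qed
  then have Mne: "M \<noteq> {}" by (auto simp: M_def)
  have finM: "finite (card ` M)"
    using finite_subset[OF _ finI] by (auto simp: M_def maximal_independent_def)
  have "beta V E \<in> card ` M"
    unfolding beta_def using Min_in[OF finM] Mne by (simp add: M_def setcompr_eq_image)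
  then obtain S where S: "maximal_independent V E S" "beta V E = card S" by (auto simp: M_def)
  have SV: "S \<subseteq> V" and indS: "independent V E S" using S unfolding maximal_independent_def independent_def by auto
  have finS: "finite S" using SV fin finite_subset by blast
  have cover: "V \<subseteq> S \<union> (\<Union>s\<in>S. {u \<in> V. E s u})"
  proof
    fix v assume v: "v \<in> V"
    show "v \<in> S \<union> (\<Union>s\<in>S. {u \<in> V. E s u})"
    proof (rule ccontr)
      assume nv: "\<not> ?thesis"
      have "independent V E (insert v S)"
        unfolding independent_def
      proof (intro conjI ballI)
        show "insert v S \<subseteq> V" using v SV by auto
        fix u w assume "u \<in> insert v S" "w \<in> insert v S"
        then show "\<not> E u w" using nv indS ir sy v unfolding independent_def by blast
      qed
      then have "insert v S = S" using S(1) unfolding maximal_independent_def by blast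
      then show False using nv by blast
    qed
  qed
  have "card V \<le> card (S \<union> (\<Union>s\<in>S. {u \<in> V. E s u}))"
    by (rule card_mono) (use finS fin cover in auto)
  also have "\<dots> \<le> card S + card (\<Union>s\<in>S. {u \<in> V. E s u})" by (rule card_Un_le)
  also have "card (\<Union>s\<in>S. {u \<in> V. E s u}) \<le> (\<Sum>s\<in>S. card {u \<in> V. E s u})"
    by (rule card_UN_le[OF finS])
  also have "(\<Sum>s\<in>S. card {u \<in> V. E s u}) = card S * d"
    using reg SV unfolding regular_def degree_def by (simp add: subset_iff)
  finally have "n \<le> card S * (d + 1)" using n by simp
  then have "real n \<le> real (card S) * (real d + 1)" by (metis of_nat_Suc of_nat_le_iff of_nat_mult Suc_eq_plus1 add.commute)
  then show ?thesis using S(2) by (simp add: divide_le_eq add_pos_pos)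
qed

theorem lemma4:
  shows "(\<forall>(V::'a set) n. finite V \<and> card V = n \<and> n \<ge> 1 \<longrightarrow>
            (\<forall>x. SOL V (complete_graph V) x \<longleftrightarrow> simplex V x))
    \<and> (\<forall>(V::'a set) E x. forest V E \<and> SOL V E x \<and> supp V x = V \<longrightarrow> union_K1_K2 V E)
    \<and> (\<forall>(V::'a set) E x. forest V E \<and> SOL V E x \<longrightarrow>
            union_K1_K2 (supp V x) (induced E (supp V x)))
    \<and> (\<forall>(V::'a set) E n d. simple_graph V E \<and> card V = n \<and> regular V E d \<longrightarrow>
            real (beta V E) \<ge> real n / (real d + 1))"
proof (intro conjI allI impI)
  fix V :: "'a set" and n x assume h: "finite V \<and> card V = n \<and> n \<ge> 1"
  then have "V \<noteq> {}" by auto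
  with h show "SOL V (complete_graph V) x \<longleftrightarrow> simplex V x" using partA by blast
next
  fix V :: "'a set" and E x assume "forest V E \<and> SOL V E x \<and> supp V x = V"
  then show "union_K1_K2 V E" using partB by blast
next
  fix V :: "'a set" and E x assume "forest V E \<and> SOL V E x"
  then show "union_K1_K2 (supp V x) (induced E (supp V x))" using partC by blast
next
  fix V :: "'a set" and E n d assume "simple_graph V E \<and> card V = n \<and> regular V E d"
  then show "real (beta V E) \<ge> real n / (real d + 1)" using partD by blast
qed

end
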